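(* Let $\Gamma$ be a graph. Then $\Gamma$ is strongly shortcut as a graph if and only if $\Gamma$ does not approximate $n$-gons.
   Context: Graphs are geodesic metric spaces with each edge isometric to the unit interval. The cycle graph $S_n$ is the graph isometric to a Riemannian circle of length $n$; a cycle in $\Gamma$ is a combinatorial map $\alpha\colon S_n\to\Gamma$; for $K>1$ it is $\frac1K$-almost isometric if $d(\alpha(p),\alpha(\bar p))\ge\frac1K\cdot\frac n2$ for all antipodal $p,\bar p\in S_n$. $\Gamma$ is strongly shortcut as a graph if for some $K>1$ there is a bound on the lengths of its $\frac1K$-almost isometric cycles. $S_n^0$ is the vertex set of $S_n$ with the induced metric and $\lambda S_n^0$ is it with the metric scaled by $\lambda>0$. A metric space $X$ approximates $n$-gons if for every $K>1$ and every $n\in\mathbb N$ there exist $K$-bilipschitz embeddings $\lambda S_n^0\to X$ for arbitrarily large $\lambda>0$. *)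

theory Defs
  imports Complex_Main
begin

definition is_graph :: "('a \<Rightarrow> 'a \<Rightarrow> bool) \<Rightarrow> bool" where
  "is_graph E \<longleftrightarrow> (\<forall>u v. E u v \<longrightarrow> E v u) \<and> (\<forall>u. \<not> E u u)"

definition is_walk :: "('a \<Rightarrow> 'a \<Rightarrow> bool) \<Rightarrow> nat \<Rightarrow> (nat \<Rightarrow> 'a) \<Rightarrow> bool" where
  "is_walk E n w \<longleftrightarrow> (\<forall>i<n. E (w i) (w (Suc i)))"

definition connected_graph :: "('a \<Rightarrow> 'a \<Rightarrow> bool) \<Rightarrow> bool" where
  "connected_graph E \<longleftrightarrow> (\<forall>u v. \<exists>n w. is_walk E n w \<and> w 0 = u \<and> w n = v)"

definition gdist :: "('a \<Rightarrow> 'a \<Rightarrow> bool) \<Rightarrow> 'a \<Rightarrow> 'a \<Rightarrow> real" where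
  "gdist E u v = real (LEAST n. \<exists>w. is_walk E n w \<and> w 0 = u \<and> w n = v)"

text \<open>Points of the geometric realisation: a triple (u, v, s) is the point at
distance s from u on the edge uv (0 \<le> s \<le> 1); a vertex u is also represented as
(u, u, 0).  Representations are not unique; the distance below identifies them.\<close>
type_synonym 'a gpoint = "'a \<times> 'a \<times> real"

definition gpoints :: "('a \<Rightarrow> 'a \<Rightarrow> bool) \<Rightarrow> 'a gpoint set" where
  "gpoints E = {(u, v, s). (E u v \<and> 0 \<le> s \<and> s \<le> 1) \<or> (u = v \<and> s = 0)}"

text \<open>Distance in the realisation: either inside a common edge, or leaving through
an endpoint of each edge and travelling along a shortest combinatorial path.\<close>
definition gpdist :: "('a \<Rightarrow> 'a \<Rightarrow> bool) \<Rightarrow> 'a gpoint \<Rightarrow> 'a gpoint \<Rightarrow> real" where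
  "gpdist E p q = (case p of (u, v, s) \<Rightarrow> case q of (u', v', t) \<Rightarrow>
     let via = Min {s + gdist E u u' + t, s + gdist E u v' + (1 - t),
                    (1 - s) + gdist E v u' + t, (1 - s) + gdist E v v' + (1 - t)}
     in if u \<noteq> v \<and> u = u' \<and> v = v' then min \<bar>s - t\<bar> via
        else if u \<noteq> v \<and> u = v' \<and> v = u' then min \<bar>s - (1 - t)\<bar> via
        else via)"

text \<open>A cycle of length n: a combinatorial map S_n \<rightarrow> \<Gamma>, i.e. a closed walk
w 0, ..., w n = w 0, extended linearly (unit speed) over the edges of S_n.
The circle S_n is parametrised by [0, n).\<close>
definition closed_walk :: "('a \<Rightarrow> 'a \<Rightarrow> bool) \<Rightarrow> nat \<Rightarrow> (nat \<Rightarrow> 'a) \<Rightarrow> bool" where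
  "closed_walk E n w \<longleftrightarrow> is_walk E n w \<and> w n = w 0"

definition cycle_point :: "(nat \<Rightarrow> 'a) \<Rightarrow> real \<Rightarrow> 'a gpoint" where
  "cycle_point w p = (let i = nat \<lfloor>p\<rfloor> in (w i, w (Suc i), p - real i))"

definition antipode :: "nat \<Rightarrow> real \<Rightarrow> real" where
  "antipode n p = (if p + real n / 2 < real n then p + real n / 2 else p + real n / 2 - real n)"

definition almost_isometric_cycle ::
  "('a \<Rightarrow> 'a \<Rightarrow> bool) \<Rightarrow> real \<Rightarrow> nat \<Rightarrow> (nat \<Rightarrow> 'a) \<Rightarrow> bool" where
  "almost_isometric_cycle E K n w \<longleftrightarrow> closed_walk E n w \<and>
     (\<forall>p. 0 \<le> p \<and> p < real n \<longrightarrow>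
        gpdist E (cycle_point w p) (cycle_point w (antipode n p)) \<ge> (1 / K) * (real n / 2))"

definition strongly_shortcut_graph :: "('a \<Rightarrow> 'a \<Rightarrow> bool) \<Rightarrow> bool" where
  "strongly_shortcut_graph E \<longleftrightarrow>
     (\<exists>K>1. \<exists>B::nat. \<forall>n w. almost_isometric_cycle E K n w \<longrightarrow> n \<le> B)"

definition cyc_dist :: "nat \<Rightarrow> nat \<Rightarrow> nat \<Rightarrow> real" where
  "cyc_dist n i j = min \<bar>real i - real j\<bar> (real n - \<bar>real i - real j\<bar>)"

definition approximates_ngons :: "('a \<Rightarrow> 'a \<Rightarrow> bool) \<Rightarrow> bool" where
  "approximates_ngons E \<longleftrightarrow>
     (\<forall>K>1. \<forall>n::nat. \<forall>L::real. \<exists>lam>L. \<exists>f :: nat \<Rightarrow> 'a gpoint.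
        (\<forall>i<n. f i \<in> gpoints E) \<and>
        (\<forall>i<n. \<forall>j<n. (1 / K) * (lam * cyc_dist n i j) \<le> gpdist E (f i) (f j) \<and>
                      gpdist E (f i) (f j) \<le> K * (lam * cyc_dist n i j)))"

end

theory Submission
  imports Defs
begin


definition gdn :: "('a \<Rightarrow> 'a \<Rightarrow> bool) \<Rightarrow> 'a \<Rightarrow> 'a \<Rightarrow> nat" where
  "gdn E u v = (LEAST n. \<exists>w. is_walk E n w \<and> w 0 = u \<and> w n = v)"

lemma gdist_gdn: "gdist E u v = real (gdn E u v)"
  by (simp add: gdist_def gdn_def)

lemma gdn_le: "is_walk E n w \<Longrightarrow> w 0 = u \<Longrightarrow> w n = v \<Longrightarrow> gdn E u v \<le> n"
  unfolding gdn_def by (rule Least_le) blast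

lemma gdn_walk: assumes "connected_graph E"
  shows "\<exists>w. is_walk E (gdn E u v) w \<and> w 0 = u \<and> w (gdn E u v) = v"
proof -
  from assms obtain n w where "is_walk E n w \<and> w 0 = u \<and> w n = v"
    unfolding connected_graph_def by blast
  then have "\<exists>n w. is_walk E n w \<and> w 0 = u \<and> w n = v" by blast
  then show ?thesis unfolding gdn_def by (rule LeastI_ex)
qed

lemma gdn_refl[simp]: "gdn E u u = 0"
proof -
  have "gdn E u u \<le> 0" by (rule gdn_le[of E 0 "\<lambda>_. u"]) (auto simp: is_walk_def)
  then show ?thesis by simp
qed

lemma gdn_zero: assumes "connected_graph E" "gdn E u v = 0" shows "u = v"
  using gdn_walk[OF assms(1), of u v] assms(2) by auto

lemma gdn_edge: assumes "E u v" shows "gdn E u v \<le> 1"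
  by (rule gdn_le[of E 1 "\<lambda>i. if i = 0 then u else v"]) (auto simp: is_walk_def assms)

lemma gdn_sym_le: assumes "connected_graph E" "is_graph E" shows "gdn E v u \<le> gdn E u v"
proof -
  obtain w where w: "is_walk E (gdn E u v) w" "w 0 = u" "w (gdn E u v) = v"
    using gdn_walk[OF assms(1)] by blast
  let ?n = "gdn E u v"
  have "is_walk E ?n (\<lambda>i. w (?n - i))"
    unfolding is_walk_def
  proof (intro allI impI)
    fix i assume i: "i < ?n"
    then have "E (w (?n - Suc i)) (w (Suc (?n - Suc i)))" using w(1) unfolding is_walk_def by auto
    moreover have "Suc (?n - Suc i) = ?n - i" using i by simp
    ultimately show "E (w (?n - i)) (w (?n - Suc i))" using assms(2) unfolding is_graph_def by metis
  qed
  then show ?thesis by (rule gdn_le) (use w in auto)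
qed

lemma gdn_sym: assumes "connected_graph E" "is_graph E" shows "gdn E v u = gdn E u v"
  using gdn_sym_le[OF assms, of u v] gdn_sym_le[OF assms, of v u] by simp

lemma gdn_tri: assumes "connected_graph E" shows "gdn E u x \<le> gdn E u v + gdn E v x"
proof -
  obtain w1 where w1: "is_walk E (gdn E u v) w1" "w1 0 = u" "w1 (gdn E u v) = v"
    using gdn_walk[OF assms(1)] by blast
  obtain w2 where w2: "is_walk E (gdn E v x) w2" "w2 0 = v" "w2 (gdn E v x) = x"
    using gdn_walk[OF assms(1)] by blast
  let ?a = "gdn E u v" and ?b = "gdn E v x"
  have "is_walk E (?a + ?b) (\<lambda>i. if i \<le> ?a then w1 i else w2 (i - ?a))"
    unfolding is_walk_def
  proof (intro allI impI)
    fix i assume i: "i < ?a + ?b"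
    show "E (if i \<le> ?a then w1 i else w2 (i - ?a)) (if Suc i \<le> ?a then w1 (Suc i) else w2 (Suc i - ?a))"
    proof (cases "i < ?a")
      case True then show ?thesis using w1(1) unfolding is_walk_def by auto
    next
      case False
      then have "i - ?a < ?b" using i by simp
      then have "E (w2 (i - ?a)) (w2 (Suc (i - ?a)))" using w2(1) unfolding is_walk_def by auto
      moreover have "Suc i - ?a = Suc (i - ?a)" using False by simp
      ultimately show ?thesis using False w1(3) w2(2) by (cases "i = ?a") auto
    qed
  qed
  then show ?thesis by (rule gdn_le) (use w1 w2 in auto)
qed

lemma gdn_walk_le: assumes "is_walk E n w" "i \<le> j" "j \<le> n" shows "gdn E (w i) (w j) \<le> j - i"
proof -
  have "is_walk E (j - i) (\<lambda>t. w (i + t))" using assms unfolding is_walk_def by auto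
  then show ?thesis by (rule gdn_le) (use assms in auto)
qed



lemma gdist_nonneg: "gdist E u v \<ge> 0" by (simp add: gdist_gdn)
lemma gdist_refl[simp]: "gdist E u u = 0" by (simp add: gdist_gdn)
lemma gdist_sym: "connected_graph E \<Longrightarrow> is_graph E \<Longrightarrow> gdist E v u = gdist E u v"
  by (simp add: gdist_gdn gdn_sym)
lemma gdist_tri: "connected_graph E \<Longrightarrow> gdist E u x \<le> gdist E u v + gdist E v x"
  unfolding gdist_gdn using gdn_tri[of E u x v] by linarith
lemma gdist_edge: "E u v \<Longrightarrow> gdist E u v \<le> 1"
  unfolding gdist_gdn using gdn_edge[of E u v] by simp
lemma gdist_pos: "connected_graph E \<Longrightarrow> u \<noteq> v \<Longrightarrow> gdist E u v \<ge> 1"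
  unfolding gdist_gdn using gdn_zero[of E u v] by (cases "gdn E u v") auto

lemma Min4: "Min {a, b, c, d::real} = min a (min b (min c d))"
  by (simp add: min.assoc)

lemma gp_tri:
  assumes C: "connected_graph E" and G: "is_graph E"
    and x: "(u,v,s) \<in> gpoints E" and y: "(u',v',t) \<in> gpoints E" and z: "(u'',v'',r) \<in> gpoints E"
  shows "gpdist E (u,v,s) (u'',v'',r) \<le> gpdist E (u,v,s) (u',v',t) + gpdist E (u',v',t) (u'',v'',r)"
proof -
  have e': "gdist E u' v' \<le> 1" "gdist E v' u' \<le> 1"
    using y gdist_edge[of E u' v'] gdist_edge[of E v' u'] G unfolding gpoints_def is_graph_def by auto
  note T = gdist_tri[OF C]
  have xs: "0 \<le> s" "s \<le> 1" using x unfolding gpoints_def by auto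
  have ys: "0 \<le> t" "t \<le> 1" using y unfolding gpoints_def by auto
  have zs: "0 \<le> r" "r \<le> 1" using z unfolding gpoints_def by auto
  have vx: "u = v \<Longrightarrow> s = 0" using x unfolding gpoints_def by (auto simp: G[unfolded is_graph_def])
  have vy: "u' = v' \<Longrightarrow> t = 0" using y unfolding gpoints_def by (auto simp: G[unfolded is_graph_def])
  have vz: "u'' = v'' \<Longrightarrow> r = 0" using z unfolding gpoints_def by (auto simp: G[unfolded is_graph_def])
  show ?thesis
    unfolding gpdist_def Let_def Min4 prod.case
    using T[of u u'' u'] T[of u u'' v'] T[of u v'' u'] T[of u v'' v']
      T[of v u'' u'] T[of v u'' v'] T[of v v'' u'] T[of v v'' v']
      T[of u' u'' v'] T[of u' v'' v'] T[of v' u'' u'] T[of v' v'' u']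
      e' xs ys zs vx vy vz gdist_nonneg[of E]
    by (smt (verit))
qed



lemma gp_vv: "gpdist E (a,a,0) (b,b,0) = gdist E a b"
  unfolding gpdist_def Let_def Min4 prod.case using gdist_nonneg[of E] by auto

lemma gp_pv: "gpdist E (u,v,s) (a,a,0) \<le> s + gdist E u a" "gpdist E (u,v,s) (a,a,0) \<le> (1 - s) + gdist E v a"
  unfolding gpdist_def Let_def Min4 prod.case by auto

lemma gp_vp: "gpdist E (a,a,0) (u,v,s) \<le> gdist E a u + s" "gpdist E (a,a,0) (u,v,s) \<le> gdist E a v + (1 - s)"
  unfolding gpdist_def Let_def Min4 prod.case by auto

definition circ :: "real \<Rightarrow> real \<Rightarrow> real \<Rightarrow> real" where
  "circ N x y = min \<bar>x - y\<bar> (N - \<bar>x - y\<bar>)"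

lemma walk_gd_circ:
  assumes C: "connected_graph E" and G: "is_graph E" and w: "closed_walk E N w"
    and k: "k \<le> N" and m: "m \<le> N"
  shows "gdist E (w k) (w m) \<le> circ N k m"
proof -
  have W: "is_walk E N w" "w N = w 0" using w unfolding closed_walk_def by auto
  have a: "gdist E (w k) (w m) \<le> \<bar>real k - real m\<bar>"
  proof (cases "k \<le> m")
    case True then show ?thesis using gdn_walk_le[OF W(1) True m] by (simp add: gdist_gdn)
  next
    case False then have "m \<le> k" by simp
    then show ?thesis using gdn_walk_le[OF W(1) \<open>m \<le> k\<close> k] gdist_sym[OF C G, of "w k" "w m"]
      by (simp add: gdist_gdn)
  qed
  have b: "gdist E (w k) (w m) \<le> real N - \<bar>real k - real m\<bar>"
  proof (cases "k \<le> m")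
    case True
    have "gdist E (w k) (w m) \<le> gdist E (w k) (w 0) + gdist E (w 0) (w m)" by (rule gdist_tri[OF C])
    moreover have "gdist E (w k) (w 0) \<le> real k"
      using gdn_walk_le[OF W(1), of 0 k] k gdist_sym[OF C G, of "w 0" "w k"] by (simp add: gdist_gdn)
    moreover have "gdist E (w 0) (w m) \<le> real N - real m"
      using gdn_walk_le[OF W(1) m order_refl] W(2) m gdist_sym[OF C G, of "w 0" "w m"] by (simp add: gdist_gdn of_nat_diff)
    ultimately show ?thesis using True by simp
  next
    case False
    have "gdist E (w k) (w m) \<le> gdist E (w k) (w 0) + gdist E (w 0) (w m)" by (rule gdist_tri[OF C])
    moreover have "gdist E (w k) (w 0) \<le> real N - real k"
      using gdn_walk_le[OF W(1) k order_refl] W(2) k by (simp add: gdist_gdn of_nat_diff)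
    moreover have "gdist E (w 0) (w m) \<le> real m"
      using gdn_walk_le[OF W(1), of 0 m] m by (simp add: gdist_gdn)
    ultimately show ?thesis using False by simp
  qed
  show ?thesis using a b unfolding circ_def by simp
qed

lemma cp_floor:
  assumes "0 \<le> p"
  shows "cycle_point w p = (w (nat \<lfloor>p\<rfloor>), w (Suc (nat \<lfloor>p\<rfloor>)), p - real (nat \<lfloor>p\<rfloor>))"
    "real (nat \<lfloor>p\<rfloor>) \<le> p" "p < real (nat \<lfloor>p\<rfloor>) + 1"
  using assms by (auto simp: cycle_point_def Let_def)

lemma cp_in:
  assumes w: "closed_walk E N w" and p: "0 \<le> p" "p < real N"
  shows "cycle_point w p \<in> gpoints E"
proof -
  let ?i = "nat \<lfloor>p\<rfloor>"
  have "?i < N" using p by linarith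
  then have "E (w ?i) (w (Suc ?i))" using w unfolding closed_walk_def is_walk_def by auto
  moreover have "p - real ?i \<le> 1" "0 \<le> p - real ?i" using cp_floor(2,3)[OF p(1)] by linarith+
  ultimately show ?thesis using cp_floor(1)[OF p(1), of w] unfolding gpoints_def by auto
qed

lemma key_circ:
  fixes i p m N :: real
  assumes "i \<le> p" "p < i + 1" "m \<le> i \<or> i + 1 \<le> m" "i + 1 \<le> N" "m \<le> N" "0 \<le> m" "0 \<le> i"
  shows "min ((p - i) + min \<bar>i - m\<bar> (N - \<bar>i - m\<bar>)) ((1 - (p - i)) + min \<bar>(1 + i) - m\<bar> (N - \<bar>(1 + i) - m\<bar>))
     \<le> min \<bar>p - m\<bar> (N - \<bar>p - m\<bar>)"
  using assms by (smt (verit))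

lemma cp_v_circ:
  assumes C: "connected_graph E" and G: "is_graph E" and w: "closed_walk E N w"
    and p: "0 \<le> p" "p < real N" and m: "m \<le> N"
  shows "gpdist E (cycle_point w p) (w m, w m, 0) \<le> circ N p m"
    "gpdist E (w m, w m, 0) (cycle_point w p) \<le> circ N p m"
proof -
  let ?i = "nat \<lfloor>p\<rfloor>"
  have i: "?i < N" "real ?i \<le> p" "p < real ?i + 1" using p cp_floor(1)[OF p(1), of w] cp_floor(2,3)[OF p(1)] by linarith+
  have g1: "gdist E (w ?i) (w m) \<le> circ N ?i m" using walk_gd_circ[OF C G w, of ?i m] i m by simp
  have g2: "gdist E (w (Suc ?i)) (w m) \<le> circ N (Suc ?i) m" using walk_gd_circ[OF C G w, of "Suc ?i" m] i m by simp
  have s1: "gdist E (w m) (w ?i) = gdist E (w ?i) (w m)" by (rule gdist_sym[OF C G])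
  have s2: "gdist E (w m) (w (Suc ?i)) = gdist E (w (Suc ?i)) (w m)" by (rule gdist_sym[OF C G])
  have int: "m \<le> ?i \<or> Suc ?i \<le> m" by linarith
  have key: "min ((p - real ?i) + circ N ?i m) ((1 - (p - real ?i)) + circ N (Suc ?i) m) \<le> circ N p m"
  proof -
    have "real m \<le> real ?i \<or> real ?i + 1 \<le> real m" using int by linarith
    moreover have "real N \<ge> real ?i + 1" "real m \<le> real N" using i m by linarith+
    ultimately show ?thesis using i unfolding circ_def of_nat_Suc by (intro key_circ) auto
  qed
  show "gpdist E (cycle_point w p) (w m, w m, 0) \<le> circ N p m"
    using gp_pv[of E "w ?i" "w (Suc ?i)" "p - real ?i" "w m"] cp_floor(1)[OF p(1), of w] cp_floor(2,3)[OF p(1)] key g1 g2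
    by (smt (verit))
  show "gpdist E (w m, w m, 0) (cycle_point w p) \<le> circ N p m"
    using gp_vp[of E "w m" "w ?i" "w (Suc ?i)" "p - real ?i"] cp_floor(1)[OF p(1), of w] cp_floor(2,3)[OF p(1)] key g1 g2 s1 s2
    by (smt (verit))
qed

lemma gp_tri':
  assumes C: "connected_graph E" and G: "is_graph E"
    and "x \<in> gpoints E" "y \<in> gpoints E" "z \<in> gpoints E"
  shows "gpdist E x z \<le> gpdist E x y + gpdist E y z"
proof -
  obtain u v s where x: "x = (u,v,s)" by (cases x) auto
  obtain u' v' t where y: "y = (u',v',t)" by (cases y) auto
  obtain u'' v'' r where z: "z = (u'',v'',r)" by (cases z) auto
  show ?thesis using gp_tri[OF C G, of u v s u' v' t u'' v'' r] assms(3-5) unfolding x y z by blast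
qed

lemma vert_in[simp]: "(a, a, 0) \<in> gpoints E"
  unfolding gpoints_def by auto

lemma antipode_circ:
  assumes "0 \<le> k" "k < real N" "0 \<le> b" "b < real N"
  shows "circ N (antipode N k) b \<le> real N / 2 - circ N k b"
    "0 \<le> antipode N k" "antipode N k < real N"
proof -
  show "circ N (antipode N k) b \<le> real N / 2 - circ N k b"
    using assms unfolding circ_def antipode_def by (auto simp: abs_if min_def split: if_splits)
  show "0 \<le> antipode N k" using assms unfolding antipode_def by auto
  show "antipode N k < real N" using assms unfolding antipode_def by auto
qed

lemma div_real_bounds:
  assumes "0 < n"
  shows "real (x div n) \<le> real x / real n" "real x / real n < real (x div n) + 1"
proof -
  have e: "real x = real n * real (x div n) + real (x mod n)"
    by (metis div_mult_mod_eq of_nat_add of_nat_mult mult.commute)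
  have m: "real (x mod n) < real n" using assms by simp
  show "real (x div n) \<le> real x / real n" using assms e by (simp add: field_simps)
  show "real x / real n < real (x div n) + 1" using assms e m by (simp add: field_simps)
qed

lemma aic_lower:
  assumes C: "connected_graph E" and G: "is_graph E" and aic: "almost_isometric_cycle E K0 N w"
    and a: "a < N" and b: "b < N"
  shows "gdist E (w a) (w b) \<ge> circ N a b - (1 - 1 / K0) * (real N / 2)"
proof -
  have w: "closed_walk E N w" using aic unfolding almost_isometric_cycle_def by auto
  let ?q = "antipode N (real a)"
  have q: "0 \<le> ?q" "?q < real N" using antipode_circ(2,3)[of "real a" N "real b"] a b by auto
  have lb: "gpdist E (cycle_point w (real a)) (cycle_point w ?q) \<ge> (1 / K0) * (real N / 2)"
    using aic a unfolding almost_isometric_cycle_def by auto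
  have in1: "cycle_point w (real a) \<in> gpoints E" using cp_in[OF w, of "real a"] a by auto
  have in2: "cycle_point w ?q \<in> gpoints E" using cp_in[OF w q] .
  have t1: "gpdist E (cycle_point w (real a)) (cycle_point w ?q) \<le>
     gpdist E (cycle_point w (real a)) (w a, w a, 0) + gpdist E (w a, w a, 0) (cycle_point w ?q)"
    by (rule gp_tri'[OF C G in1 vert_in in2])
  have t2: "gpdist E (w a, w a, 0) (cycle_point w ?q) \<le>
     gpdist E (w a, w a, 0) (w b, w b, 0) + gpdist E (w b, w b, 0) (cycle_point w ?q)"
    by (rule gp_tri'[OF C G vert_in vert_in in2])
  have d1: "gpdist E (cycle_point w (real a)) (w a, w a, 0) \<le> circ N a a"
    using cp_v_circ(1)[OF C G w, of "real a" a] a by auto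
  have d1': "circ N a a = 0" unfolding circ_def by simp
  have d2: "gpdist E (w b, w b, 0) (cycle_point w ?q) \<le> circ N ?q b"
    using cp_v_circ(2)[OF C G w q, of b] b by auto
  have d3: "circ N ?q b \<le> real N / 2 - circ N a b"
    using antipode_circ(1)[of "real a" N "real b"] a b by auto
  have "(1 - 1 / K0) * (real N / 2) = real N / 2 - (1 / K0) * (real N / 2)" by (simp add: left_diff_distrib)
  then show ?thesis using lb t1 t2 d1 d1' d2 d3 gp_vv[of E "w a" "w b"] by linarith
qed

lemma circ_approx:
  fixes a b lam i j n N :: real
  assumes "lam * i - 1 < a" "a \<le> lam * i" "lam * j - 1 < b" "b \<le> lam * j" "lam > 0" "N = lam * n"
  shows "\<bar>min \<bar>a - b\<bar> (N - \<bar>a - b\<bar>) - lam * min \<bar>i - j\<bar> (n - \<bar>i - j\<bar>)\<bar> \<le> 1"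
proof -
  have "lam * min \<bar>i - j\<bar> (n - \<bar>i - j\<bar>) = min \<bar>lam * i - lam * j\<bar> (N - \<bar>lam * i - lam * j\<bar>)"
  proof -
    have h1: "\<bar>lam * i - lam * j\<bar> = lam * \<bar>i - j\<bar>"
    proof -
      have "lam * i - lam * j = lam * (i - j)" by (simp add: algebra_simps)
      then show ?thesis using assms(5) by (simp add: abs_mult)
    qed
    have "lam * min \<bar>i - j\<bar> (n - \<bar>i - j\<bar>) = min (lam * \<bar>i - j\<bar>) (lam * (n - \<bar>i - j\<bar>))"
      using assms(5) by (simp add: min_mult_distrib_left)
    also have "\<dots> = min \<bar>lam * i - lam * j\<bar> (N - \<bar>lam * i - lam * j\<bar>)"
      using h1 assms(6) by (simp add: right_diff_distrib)
    finally show ?thesis .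
  qed
  then show ?thesis using assms by (smt (verit))
qed



lemma cyc_dist_ge1: "i < n \<Longrightarrow> j < n \<Longrightarrow> i \<noteq> j \<Longrightarrow> cyc_dist n i j \<ge> 1"
  unfolding cyc_dist_def by auto

lemma fin1:
  fixes g ci lc T Tc S Sc :: real
  assumes "g \<le> ci" "ci - T / 2 \<le> g" "\<bar>ci - lc\<bar> \<le> 1" "T \<le> Tc" "S \<le> Sc" "2 \<le> T" "1 \<le> S"
  shows "lc - Tc \<le> g \<and> g \<le> lc + Sc"
  using assms by linarith

lemma dir1:
  assumes C: "connected_graph E" and G: "is_graph E" and nss: "\<not> strongly_shortcut_graph E"
  shows "approximates_ngons E"
  unfolding approximates_ngons_def
proof (intro allI impI)
  fix K :: real and n :: nat and L :: real
  assume K: "K > 1"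
  show "\<exists>lam>L. \<exists>f :: nat \<Rightarrow> 'a gpoint. (\<forall>i<n. f i \<in> gpoints E) \<and>
        (\<forall>i<n. \<forall>j<n. (1 / K) * (lam * cyc_dist n i j) \<le> gpdist E (f i) (f j) \<and>
                      gpdist E (f i) (f j) \<le> K * (lam * cyc_dist n i j))"
  proof (cases "n = 0")
    case True
    then show ?thesis by (intro exI[of _ "L + 1"]) auto
  next
    case False
    then have n: "n > 0" by simp
    define \<epsilon> where "\<epsilon> = (1 - 1 / K) / real n"
    have th: "0 < 1 - 1 / K" "1 - 1 / K < 1" using K by (auto simp: field_simps)
    have n1: "real n \<ge> 1" using n by simp
    have "(1 - 1 / K) / real n \<le> (1 - 1 / K) / 1"
      by (rule divide_left_mono) (use n1 th in auto)
    then have e1: "\<epsilon> < 1" unfolding \<epsilon>_def using th by (metis div_by_1 order_le_less_trans)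
    have e0: "0 < \<epsilon>" unfolding \<epsilon>_def using th n by simp
    note e = e0 e1
    define K0 where "K0 = 1 / (1 - \<epsilon>)"
    have K0: "K0 > 1" "1 / K0 = 1 - \<epsilon>" unfolding K0_def using e by (auto simp: field_simps)
    define M where "M = max L (2 * K / (K - 1))"
    define B where "B = nat \<lceil>real n * M\<rceil>"
    from nss K0(1) obtain N w where aic: "almost_isometric_cycle E K0 N w" and NB: "\<not> N \<le> B"
      unfolding strongly_shortcut_graph_def by blast
    have w: "closed_walk E N w" using aic unfolding almost_isometric_cycle_def by auto
    define lam where "lam = real N / real n"
    have "real N > real n * M" using NB unfolding B_def by linarith
    then have lamM: "lam > M" unfolding lam_def using n by (simp add: field_simps)
    have lamL: "lam > L" using lamM unfolding M_def by simp
    have lamK: "lam \<ge> 2 * K / (K - 1)" using lamM unfolding M_def by simp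
    have lampos: "lam > 0" using lamK K by (smt (verit) divide_pos_pos)
    have Npos: "N > 0" using lampos unfolding lam_def by (cases N) auto
    have Nlam: "real N = lam * real n" unfolding lam_def using n by simp
    have lk: "lam * (K - 1) \<ge> 2 * K" using lamK K by (simp add: field_simps)
    have theta: "lam * (1 - 1 / K) \<ge> 2" using lk K by (simp add: field_simps)
    have theta2: "(K - 1) * lam \<ge> 1" using lk K by (simp add: algebra_simps)
    define f :: "nat \<Rightarrow> 'a gpoint" where "f i = (w (i * N div n), w (i * N div n), 0)" for i
    show ?thesis
    proof (rule exI[of _ lam], rule conjI[OF lamL], rule exI[of _ f], rule conjI)
      show "\<forall>i<n. f i \<in> gpoints E" unfolding f_def by simp
    next
     show "\<forall>i<n. \<forall>j<n. 1 / K * (lam * cyc_dist n i j) \<le> gpdist E (f i) (f j) \<and>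
         gpdist E (f i) (f j) \<le> K * (lam * cyc_dist n i j)"
     proof (intro allI impI)
      fix i j assume i: "i < n" and j: "j < n"
      let ?a = "i * N div n" and ?b = "j * N div n"
      have a: "?a < N" using i Npos by (intro less_mult_imp_div_less) (simp add: mult.commute)
      have b: "?b < N" using j Npos by (intro less_mult_imp_div_less) (simp add: mult.commute)
      have d: "gpdist E (f i) (f j) = gdist E (w ?a) (w ?b)" unfolding f_def by (rule gp_vv)
      have up: "gdist E (w ?a) (w ?b) \<le> circ N ?a ?b" using walk_gd_circ[OF C G w, of ?a ?b] a b by simp
      have lo: "gdist E (w ?a) (w ?b) \<ge> circ N ?a ?b - (1 - 1 / K0) * (real N / 2)"
        by (rule aic_lower[OF C G aic a b])
      have eN: "(1 - 1 / K0) * (real N / 2) = (1 - 1 / K) * lam / 2"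
        unfolding K0(2) \<epsilon>_def Nlam using n by (simp add: field_simps)
      have ra: "lam * real i - 1 < real ?a" "real ?a \<le> lam * real i"
        using div_real_bounds[OF n, of "i * N"] unfolding lam_def by (auto simp: field_simps)
      have rb: "lam * real j - 1 < real ?b" "real ?b \<le> lam * real j"
        using div_real_bounds[OF n, of "j * N"] unfolding lam_def by (auto simp: field_simps)
      have ap: "\<bar>circ N ?a ?b - lam * cyc_dist n i j\<bar> \<le> 1"
        unfolding circ_def cyc_dist_def by (rule circ_approx[OF ra rb lampos Nlam])
      show "(1 / K) * (lam * cyc_dist n i j) \<le> gpdist E (f i) (f j) \<and>
            gpdist E (f i) (f j) \<le> K * (lam * cyc_dist n i j)"
      proof (cases "i = j")
        case True
        then show ?thesis using d by (simp add: cyc_dist_def)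
      next
        case False
        define c where "c = cyc_dist n i j"
        have c1: "c \<ge> 1" unfolding c_def by (rule cyc_dist_ge1[OF i j False])
        have m1: "lam * (1 - 1 / K) * c \<ge> lam * (1 - 1 / K)"
          using c1 theta by (simp add: mult_le_cancel_left1)
        have m2: "(K - 1) * lam * c \<ge> (K - 1) * lam" using c1 theta2 by (simp add: mult_le_cancel_left1)
        have x1: "(1 / K) * (lam * c) = lam * c - lam * (1 - 1 / K) * c" by (simp add: algebra_simps)
        have x2: "K * (lam * c) = lam * c + (K - 1) * lam * c" by (simp add: algebra_simps)
        have x3: "(1 - 1 / K) * lam / 2 = lam * (1 - 1 / K) / 2" by simp
        have lo': "circ N ?a ?b - lam * (1 - 1 / K) / 2 \<le> gdist E (w ?a) (w ?b)"
          using lo eN x3 by simp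
        have "lam * c - lam * (1 - 1 / K) * c \<le> gdist E (w ?a) (w ?b) \<and>
            gdist E (w ?a) (w ?b) \<le> lam * c + (K - 1) * lam * c"
          by (rule fin1[OF up lo' ap[unfolded c_def[symmetric]] m1 m2 theta theta2])
        then show ?thesis unfolding c_def[symmetric] d x1 x2 .
      qed
     qed
    qed
  qed
qed



lemma P_mono: "i \<le> j \<Longrightarrow> sum (ll::nat\<Rightarrow>nat) {..<i} \<le> sum ll {..<j}"
  by (rule sum_mono2) auto

lemma P_Suc_gt: "ll i \<ge> 1 \<Longrightarrow> sum (ll::nat\<Rightarrow>nat) {..<i} < sum ll {..<Suc i}"
  by simp

lemma seg_unique:
  fixes ll :: "nat \<Rightarrow> nat"
  assumes "sum ll {..<i} \<le> k" "k < sum ll {..<Suc i}"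
  shows "(LEAST i. k < sum ll {..<Suc i}) = i"
proof (rule Least_equality)
  show "k < sum ll {..<Suc i}" by fact
  fix m assume "k < sum ll {..<Suc m}"
  then show "i \<le> m"
    using assms(1) P_mono[of "Suc m" i ll] by (cases "i \<le> m") auto
qed

lemma seg_exists:
  fixes ll :: "nat \<Rightarrow> nat"
  assumes "k < sum ll {..<n}"
  shows "(LEAST i. k < sum ll {..<Suc i}) < n \<and> sum ll {..<(LEAST i. k < sum ll {..<Suc i})} \<le> k
     \<and> k < sum ll {..<Suc (LEAST i. k < sum ll {..<Suc i})}"
proof -
  have n: "n \<ge> 1" using assms by (cases n) auto
  have ex: "k < sum ll {..<Suc (n - 1)}" using assms n by simp
  let ?i = "LEAST i. k < sum ll {..<Suc i}"
  have le: "?i \<le> n - 1" by (rule Least_le) (rule ex)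
  have a: "k < sum ll {..<Suc ?i}" by (rule LeastI) (rule ex)
  have b: "sum ll {..<?i} \<le> k"
  proof (cases ?i)
    case 0 then show ?thesis by simp
  next
    case (Suc m)
    then have "\<not> k < sum ll {..<Suc m}" using not_less_Least[of m "\<lambda>i. k < sum ll {..<Suc i}"] by auto
    then show ?thesis using Suc by simp
  qed
  show ?thesis using le n a b by auto
qed

lemma concat_walk:
  fixes ll :: "nat \<Rightarrow> nat"
  assumes n: "n \<ge> 1"
    and Wi: "\<And>i. i < n \<Longrightarrow> is_walk E (ll i) (W i) \<and> W i 0 = V i \<and> W i (ll i) = V (Suc i)"
    and pos: "\<And>i. i < n \<Longrightarrow> ll i \<ge> 1" and Vn: "V n = V 0"
  shows "\<exists>w. closed_walk E (sum ll {..<n}) w \<and>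
    (\<forall>k < sum ll {..<n}. \<exists>i<n. sum ll {..<i} \<le> k \<and> k < sum ll {..<Suc i} \<and> w k = W i (k - sum ll {..<i}))"
proof -
  let ?P = "\<lambda>i. sum ll {..<i}"
  let ?N = "?P n"
  define seg where "seg k = (LEAST i. k < ?P (Suc i))" for k
  define w where "w k = (if k < ?N then W (seg k) (k - ?P (seg k)) else V 0)" for k
  have segp: "seg k < n \<and> ?P (seg k) \<le> k \<and> k < ?P (Suc (seg k))" if "k < ?N" for k
    unfolding seg_def using seg_exists[OF that] .
  have segu: "seg k = i" if "?P i \<le> k" "k < ?P (Suc i)" for k i
    unfolding seg_def using seg_unique[OF that] .
  have wk: "w k = W i (k - ?P i)" if "i < n" "?P i \<le> k" "k < ?P (Suc i)" for k i
  proof -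
    have "?P (Suc i) \<le> ?N" using that(1) by (intro P_mono) simp
    then show ?thesis unfolding w_def using segu[OF that(2,3)] that by auto
  qed
  have Npos: "0 < ?N" using P_mono[of 1 n ll] pos[of 0] n by simp
  have w0: "w 0 = V 0" using wk[of 0 0] Wi[of 0] pos[of 0] n by simp
  have wN: "w ?N = V 0" unfolding w_def by simp
  have walk: "is_walk E ?N w" unfolding is_walk_def
  proof (intro allI impI)
    fix k assume k: "k < ?N"
    let ?i = "seg k"
    have s: "?i < n" "?P ?i \<le> k" "k < ?P (Suc ?i)" using segp[OF k] by auto
    let ?t = "k - ?P ?i"
    have lt: "?t < ll ?i" using s by simp
    have W: "is_walk E (ll ?i) (W ?i)" "W ?i 0 = V ?i" "W ?i (ll ?i) = V (Suc ?i)" using Wi[OF s(1)] by auto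
    have step: "E (W ?i ?t) (W ?i (Suc ?t))" using W(1) lt unfolding is_walk_def by auto
    have e1: "w k = W ?i ?t" by (rule wk[OF s])
    show "E (w k) (w (Suc k))"
    proof (cases "Suc ?t < ll ?i")
      case True
      then have "Suc k < ?P (Suc ?i)" using s by simp
      then have "w (Suc k) = W ?i (Suc k - ?P ?i)" using wk[of ?i "Suc k"] s by simp
      moreover have "Suc k - ?P ?i = Suc ?t" using s by simp
      ultimately show ?thesis using e1 step by simp
    next
      case False
      then have eq: "Suc ?t = ll ?i" using lt by simp
      then have sk: "Suc k = ?P (Suc ?i)" using s by simp
      show ?thesis
      proof (cases "Suc ?i < n")
        case True
        have "?P (Suc ?i) < ?P (Suc (Suc ?i))" using pos[OF True] by simp
        then have "w (Suc k) = W (Suc ?i) 0" using wk[of "Suc ?i" "Suc k"] True sk by simp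
        then have "w (Suc k) = V (Suc ?i)" using Wi[OF True] by simp
        then show ?thesis using e1 step eq W(3) by simp
      next
        case False
        then have "Suc ?i = n" using s by simp
        then have "w (Suc k) = V (Suc ?i)" using sk wN Vn by simp
        then show ?thesis using e1 step eq W(3) by simp
      qed
    qed
  qed
  show ?thesis
  proof (rule exI[of _ w], intro conjI allI impI)
    show "closed_walk E ?N w" unfolding closed_walk_def using walk w0 wN by simp
    fix k assume k: "k < ?N"
    show "\<exists>i<n. ?P i \<le> k \<and> k < ?P (Suc i) \<and> w k = W i (k - ?P i)"
      using segp[OF k] wk[of "seg k" k] by blast
  qed
qed

lemma seg_gap:
  fixes ll :: "nat \<Rightarrow> nat"
  assumes bnd: "\<And>m. m < n \<Longrightarrow> ll m \<le> b"
    and i: "i < n" and j: "j < n"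
    and ki: "sum ll {..<i} \<le> k" "k < sum ll {..<Suc i}"
    and kj: "sum ll {..<j} \<le> k'" "k' < sum ll {..<Suc j}"
    and kk: "k < k'"
  shows "i \<le> j" "k' - k < (Suc j - i) * b" "sum ll {..<n} - (k' - k) < (n - j + Suc i) * b"
proof -
  let ?P = "\<lambda>i. sum ll {..<i}"
  show ij: "i \<le> j"
  proof (rule ccontr)
    assume "\<not> i \<le> j"
    then have "?P (Suc j) \<le> ?P i" by (intro P_mono) simp
    then show False using ki kj kk by simp
  qed
  have split: "?P q = ?P p + sum ll {p..<q}" if "p \<le> q" for p q
    using that by (simp add: lessThan_atLeast0 sum.atLeastLessThan_concat)
  have sb: "sum ll {p..<q} \<le> (q - p) * b" if "q \<le> n" for p q
  proof -
    have "sum ll {p..<q} \<le> of_nat (card {p..<q}) * b" using that bnd by (intro sum_bounded_above) auto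
    then show ?thesis by simp
  qed
  have "k' - k < ?P (Suc j) - ?P i" using ki kj kk by simp
  also have "\<dots> = sum ll {i..<Suc j}" using split[of i "Suc j"] ij by simp
  also have "\<dots> \<le> (Suc j - i) * b" using sb[of "Suc j" i] j by simp
  finally show "k' - k < (Suc j - i) * b" .
  have Pn: "?P (Suc j) \<le> ?P n" using j by (intro P_mono) simp
  have "?P n - (k' - k) < (?P n - ?P j) + ?P (Suc i)" using ki kj kk Pn by simp
  also have "?P n - ?P j = sum ll {j..<n}" using split[of j n] j by simp
  also have "?P (Suc i) = sum ll {0..<Suc i}" by (simp add: lessThan_atLeast0)
  also have "sum ll {j..<n} + sum ll {0..<Suc i} \<le> (n - j) * b + (Suc i - 0) * b"
    using sb[of n j] sb[of "Suc i" 0] i by (intro add_mono) auto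
  finally show "?P n - (k' - k) < (n - j + Suc i) * b" by (simp add: add_mult_distrib)
qed



lemma seg_cyc:
  fixes ll :: "nat \<Rightarrow> nat"
  assumes bnd: "\<And>m. m < n \<Longrightarrow> ll m \<le> b"
    and i: "i < n" and j: "j < n"
    and ki: "sum ll {..<i} \<le> k" "k < sum ll {..<Suc i}"
    and kj: "sum ll {..<j} \<le> k'" "k' < sum ll {..<Suc j}"
    and kk: "k < k'" and X1: "X \<le> real k' - real k" and X2: "X \<le> real (sum ll {..<n}) - (real k' - real k)"
    and b: "b > 0"
  shows "cyc_dist n i j \<ge> X / real b - 1"
proof -
  note g = seg_gap[OF bnd i j ki kj kk]
  have r1: "real k' - real k < (real j - real i + 1) * real b"
    using g(1,2) kk by (simp add: of_nat_diff) (metis of_nat_add of_nat_1 of_nat_diff of_nat_less_iff of_nat_mult add.commute Suc_eq_plus1 g(2) less_or_eq_imp_le kk g(1) Suc_diff_le)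
  have r2: "real (sum ll {..<n}) - (real k' - real k) < (real n - real j + real i + 1) * real b"
  proof -
    have "k' \<le> sum ll {..<n}" using kj(2) P_mono[of "Suc j" n ll] j by simp
    then have "real (sum ll {..<n} - (k' - k)) = real (sum ll {..<n}) - (real k' - real k)"
      using kk by (simp add: of_nat_diff)
    moreover have "real ((n - j + Suc i) * b) = (real n - real j + real i + 1) * real b"
    proof -
      have "real (n - j + Suc i) = real n - real j + real i + 1" using j by (simp add: of_nat_diff)
      then show ?thesis by (simp only: of_nat_mult)
    qed
    ultimately show ?thesis using g(3) by (metis of_nat_less_iff)
  qed
  have bp: "real b > 0" using b by simp
  have q1: "X / real b < real j - real i + 1" using r1 X1 bp by (simp add: divide_less_eq)
  have "X < (real n - real j + real i + 1) * real b" using r2 X2 by linarith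
  then have "X / real b < real n - real j + real i + 1" using bp by (simp add: divide_less_eq)
  then have q2: "X / real b < real n - (real j - real i) + 1" by simp
  show ?thesis unfolding cyc_dist_def using g(1) q1 q2 by (simp add: abs_if)
qed

lemma lin_comb:
  fixes X1 Y NL LR LRB NKB T U V W LL Bt lam :: real
  assumes "X1 \<ge> Y" "Y = NL / 2 - LR - LRB" "NL / 2 - NKB / 2 = T / 2" "T \<ge> U" "U \<ge> V" "V = W"
    "W \<ge> 140 * LL" "LR \<le> 2 * lam" "LRB \<le> 4 * LL" "Bt \<le> 32 * lam + 32 * LL" "lam \<le> LL"
  shows "X1 - Bt \<ge> NKB / 2"
  using assms by linarith

lemma fin2:
  fixes d lam b N n cyc :: real
  assumes d0: "d > 0" and d8: "d \<le> 1/8" and l8: "lam \<ge> 8" and dl: "d * lam \<ge> 2"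
    and b1: "1 \<le> b" and bl: "b \<le> (1 + d) * lam + 2"
    and Nn: "N \<ge> n * (lam / (1 + d) - 2)" and nd: "n * d \<ge> 140"
    and cy: "cyc \<ge> (N / 2 - 1) / b - 1"
  shows "lam / (1 + d) * cyc - 4 - 2 * b \<ge> N / (2 * (1 + 8 * d))"
proof -
  define K where "K = 1 + d"
  define r where "r = 1 + 8 * d"
  have K: "1 < K" "K \<le> 9/8" using d0 d8 unfolding K_def by auto
  have r: "1 < r" "r \<le> 2" using d0 d8 unfolding r_def by auto
  have lp: "lam > 0" using l8 by simp
  have n0: "n \<ge> 0"
  proof (rule ccontr)
    assume "\<not> n \<ge> 0" then have "n * d < 0" using d0 by (simp add: mult_neg_pos)
    then show False using nd by simp
  qed
  have h1: "b \<le> (1 + 2 * d) * lam" using bl dl by (simp add: algebra_simps)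
  have h2: "K * b \<le> (1 + 4 * d) * lam"
  proof -
    have "K * b \<le> K * ((1 + 2 * d) * lam)" using h1 K by simp
    also have "\<dots> = (1 + 3 * d + 2 * d * d) * lam" unfolding K_def by (simp add: algebra_simps)
    also have "\<dots> \<le> (1 + 4 * d) * lam"
    proof -
      have "2 * d * d \<le> d" using d0 d8 by (simp add: mult_le_cancel_right1 algebra_simps)
      then show ?thesis using lp by (intro mult_right_mono) auto
    qed
    finally show ?thesis .
  qed
  have h3: "cyc * b \<ge> N / 2 - 1 - b"
  proof -
    have "(N / 2 - 1) / b \<le> cyc + 1" using cy by simp
    then have "N / 2 - 1 \<le> (cyc + 1) * b" using b1 by (simp add: divide_le_eq)
    then show ?thesis by (simp add: algebra_simps)
  qed
  have "(1 + 2 * d) * lam \<le> 2 * lam" using d8 lp by (intro mult_right_mono) auto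
  then have h4: "b \<le> 2 * lam" using h1 by linarith
  have h5: "lam / K - 2 \<ge> lam / 4"
  proof -
    have "lam / K \<ge> lam / (9/8)" using K lp by (intro divide_left_mono) auto
    then show ?thesis using l8 by simp
  qed
  have h6: "N \<ge> n * lam / 4"
  proof -
    have "n * (lam / 4) \<le> n * (lam / K - 2)" using h5 n0 by (intro mult_left_mono)
    then show ?thesis using Nn unfolding K_def by linarith
  qed
  have "n * lam / 4 \<ge> 0" using n0 lp by simp
  then have N0: "N \<ge> 0" using h6 by linarith
  \<comment> \<open>main inequality multiplied by K r b\<close>
  have m1: "lam * r * (cyc * b) \<ge> lam * r * (N / 2 - 1 - b)"
    using h3 lp r by (intro mult_left_mono) auto
  have m3: "lam * r - K * b \<ge> 4 * d * lam" using h2 unfolding r_def by (simp add: algebra_simps)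
  have m4: "N * (lam * r - K * b) \<ge> N * (4 * d * lam)" using m3 N0 by (intro mult_left_mono)
  have m5: "N * (4 * d * lam) \<ge> (n * lam / 4) * (4 * d * lam)" using h6 d0 lp by (intro mult_right_mono) auto
  have m6: "(n * lam / 4) * (4 * d * lam) = (n * d) * (lam * lam)" by (simp add: algebra_simps)
  have m7: "(n * d) * (lam * lam) \<ge> 140 * (lam * lam)" using nd by (intro mult_right_mono) auto
  have m8: "lam * r \<le> 2 * lam" using r lp by simp
  have m9: "lam * r * b \<le> (2 * lam) * (2 * lam)" by (rule mult_mono[OF m8 h4]) (use lp b1 in auto)
  have m10: "(4 + 2 * b) * K * r * b \<le> (4 + 4 * lam) * 2 * 2 * (2 * lam)"
  proof -
    have q1: "4 + 2 * b \<le> 4 + 4 * lam" using h4 by simp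
    have q2: "(4 + 2 * b) * K \<le> (4 + 4 * lam) * 2" by (rule mult_mono[OF q1]) (use K b1 lp in auto)
    have q3: "(4 + 2 * b) * K * r \<le> (4 + 4 * lam) * 2 * 2" by (rule mult_mono[OF q2]) (use r K b1 lp in auto)
    show ?thesis by (rule mult_mono[OF q3 h4]) (use b1 lp in auto)
  qed
  have m11: "lam \<le> lam * lam" using l8 by (simp add: mult_le_cancel_left1)
  have main: "lam * r * (cyc * b) - (4 + 2 * b) * K * r * b \<ge> N * K * b / 2"
  proof -
    have e1: "lam * r * (N / 2 - 1 - b) = N * (lam * r) / 2 - lam * r - lam * r * b" by (simp add: algebra_simps)
    have e2: "N * (lam * r) / 2 - N * K * b / 2 = N * (lam * r - K * b) / 2" by (simp add: algebra_simps)
    have e3: "(4 + 4 * lam) * 2 * 2 * (2 * lam) = 32 * lam + 32 * (lam * lam)" by (simp add: algebra_simps)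
    have e4: "(2 * lam) * (2 * lam) = 4 * (lam * lam)" by simp
    show ?thesis
      by (rule lin_comb[OF m1 e1 e2 m4 m5 m6 m7 m8 m9[unfolded e4] m10[unfolded e3] m11])
  qed
  have pos: "K * r * b > 0" using K r b1 by simp
  have A: "(lam / K * cyc - 4 - 2 * b) * (K * r * b) = lam * r * (cyc * b) - (4 + 2 * b) * K * r * b"
    using K by (simp add: field_simps)
  have Bq: "N / (2 * r) * (K * r * b) = N * K * b / 2" using r by (simp add: field_simps)
  have "N / (2 * r) * (K * r * b) \<le> (lam / K * cyc - 4 - 2 * b) * (K * r * b)" using main A Bq by simp
  then have "N / (2 * r) \<le> lam / K * cyc - 4 - 2 * b" using pos by (rule mult_right_le_imp_le)
  then show ?thesis unfolding K_def r_def .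
qed



lemma cyc_dist_sym: "cyc_dist n i j = cyc_dist n j i"
  unfolding cyc_dist_def by (simp add: abs_minus_commute)

lemma cyc_dist_next:
  assumes "i < n" "n \<ge> 3" shows "cyc_dist n i (Suc i mod n) = 1"
proof (cases "Suc i < n")
  case True then show ?thesis using assms unfolding cyc_dist_def by auto
next
  case False then have "Suc i = n" using assms by simp
  then show ?thesis using assms unfolding cyc_dist_def by (auto simp: of_nat_diff)
qed

lemma vert_near:
  assumes "x \<in> gpoints E"
  shows "gpdist E x (fst x, fst x, 0) \<le> 1" "gpdist E (fst x, fst x, 0) x \<le> 1"
proof -
  obtain u v s where x: "x = (u, v, s)" by (cases x) auto
  have "s \<le> 1" using assms unfolding x gpoints_def by auto
  then show "gpdist E x (fst x, fst x, 0) \<le> 1" "gpdist E (fst x, fst x, 0) x \<le> 1"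
    unfolding x using gp_pv(1)[of E u v s u] gp_vp(1)[of E u u v s] by auto
qed

lemma dir2_core:
  assumes C: "connected_graph E" and G: "is_graph E" and ap: "approximates_ngons E"
    and r1: "1 < r" and r2: "r \<le> 2"
  shows "\<exists>N w. almost_isometric_cycle E r N w \<and> B < N"
proof -
  define d where "d = (r - 1) / 8"
  have d: "0 < d" "d \<le> 1/8" "r = 1 + 8 * d" using r1 r2 unfolding d_def by (auto simp: field_simps)
  define K where "K = 1 + d"
  have K: "1 < K" "K \<le> 9/8" using d unfolding K_def by auto
  define n where "n = nat \<lceil>140 / d\<rceil> + 3"
  have n3: "n \<ge> 3" unfolding n_def by simp
  have nd: "real n * d \<ge> 140"
  proof -
    have "real n \<ge> 140 / d" unfolding n_def by linarith
    then show ?thesis using d by (simp add: divide_le_eq)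
  qed
  define Lam where "Lam = 8 + 2 / d + 4 * real B"
  from ap K(1) obtain lam and f :: "nat \<Rightarrow> 'a gpoint" where lam: "lam > Lam"
    and fin: "\<forall>i<n. f i \<in> gpoints E"
    and bil: "\<forall>i<n. \<forall>j<n. (1 / K) * (lam * cyc_dist n i j) \<le> gpdist E (f i) (f j) \<and>
                      gpdist E (f i) (f j) \<le> K * (lam * cyc_dist n i j)"
    unfolding approximates_ngons_def by blast
  have l8: "lam \<ge> 8" and dl: "d * lam \<ge> 2" and lB: "lam > 4 * real B"
  proof -
    have g: "2 / d \<ge> 0" using d by simp
    show "lam \<ge> 8" using lam g unfolding Lam_def by linarith
    show "lam > 4 * real B" using lam g unfolding Lam_def by linarith
    have "lam > 2 / d" using lam \<open>2 / d \<ge> 0\<close> unfolding Lam_def by simp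
    then show "d * lam \<ge> 2" using d by (simp add: divide_less_eq mult.commute)
  qed
  have lK: "lam / K - 2 \<ge> lam / 4"
  proof -
    have "lam / K \<ge> lam / (9/8)" using K l8 by (intro divide_left_mono) auto
    then show ?thesis using l8 by simp
  qed
  define v where "v i = fst (f i)" for i
  define V where "V i = v (i mod n)" for i
  have Vi: "V i = v i" if "i < n" for i using that unfolding V_def by simp
  have Vn: "V n = V 0" unfolding V_def by simp
  have gdV: "lam * cyc_dist n i j / K - 2 \<le> gdist E (v i) (v j) \<and> gdist E (v i) (v j) \<le> K * (lam * cyc_dist n i j) + 2"
    if i: "i < n" and j: "j < n" for i j
  proof -
    have fi: "f i \<in> gpoints E" and fj: "f j \<in> gpoints E" using fin i j by auto
    have b: "(1 / K) * (lam * cyc_dist n i j) \<le> gpdist E (f i) (f j)"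
      "gpdist E (f i) (f j) \<le> K * (lam * cyc_dist n i j)" using bil i j by auto
    have n1: "gpdist E (f i) (v i, v i, 0) \<le> 1" "gpdist E (v i, v i, 0) (f i) \<le> 1"
      using vert_near[OF fi] unfolding v_def by auto
    have n2: "gpdist E (f j) (v j, v j, 0) \<le> 1" "gpdist E (v j, v j, 0) (f j) \<le> 1"
      using vert_near[OF fj] unfolding v_def by auto
    have t1: "gpdist E (f i) (f j) \<le> gpdist E (f i) (v i, v i, 0) + gpdist E (v i, v i, 0) (f j)"
      by (rule gp_tri'[OF C G fi vert_in fj])
    have t2: "gpdist E (v i, v i, 0) (f j) \<le> gpdist E (v i, v i, 0) (v j, v j, 0) + gpdist E (v j, v j, 0) (f j)"
      by (rule gp_tri'[OF C G vert_in vert_in fj])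
    have t3: "gpdist E (v i, v i, 0) (v j, v j, 0) \<le> gpdist E (v i, v i, 0) (f i) + gpdist E (f i) (v j, v j, 0)"
      by (rule gp_tri'[OF C G vert_in fi vert_in])
    have t4: "gpdist E (f i) (v j, v j, 0) \<le> gpdist E (f i) (f j) + gpdist E (f j) (v j, v j, 0)"
      by (rule gp_tri'[OF C G fi fj vert_in])
    have e: "lam * cyc_dist n i j / K = (1 / K) * (lam * cyc_dist n i j)" by simp
    show ?thesis using b n1 n2 t1 t2 t3 t4 gp_vv[of E "v i" "v j"] unfolding e by linarith
  qed
  define ll where "ll i = gdn E (V i) (V (Suc i))" for i
  have llb: "lam / K - 2 \<le> real (ll i) \<and> real (ll i) \<le> K * lam + 2" if i: "i < n" for i
  proof -
    have m: "Suc i mod n < n" using n3 by simp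
    have "V (Suc i) = v (Suc i mod n)" unfolding V_def ..
    then have "real (ll i) = gdist E (v i) (v (Suc i mod n))" unfolding ll_def gdist_gdn using Vi[OF i] by simp
    then show ?thesis using gdV[OF i m] cyc_dist_next[OF i n3] by simp
  qed
  have llpos: "ll i \<ge> 1" if "i < n" for i
  proof -
    have "real (ll i) > 0" using llb[OF that] lK l8 by linarith
    then show ?thesis by simp
  qed
  define W where "W i = (SOME w. is_walk E (ll i) w \<and> w 0 = V i \<and> w (ll i) = V (Suc i))" for i
  have Wi: "is_walk E (ll i) (W i) \<and> W i 0 = V i \<and> W i (ll i) = V (Suc i)" for i
    unfolding W_def ll_def using gdn_walk[OF C, of "V i" "V (Suc i)"] by (rule someI_ex)
  obtain w where cw: "closed_walk E (sum ll {..<n}) w"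
    and segs: "\<forall>k < sum ll {..<n}. \<exists>i<n. sum ll {..<i} \<le> k \<and> k < sum ll {..<Suc i} \<and> w k = W i (k - sum ll {..<i})"
    using concat_walk[where n=n and ll=ll and E=E and W=W and V=V] n3 Wi llpos Vn by auto
  define N where "N = sum ll {..<n}"
  define bN where "bN = Max (ll ` {..<n})"
  have bN: "ll m \<le> bN" if "m < n" for m unfolding bN_def using that by (intro Max_ge) auto
  have bNin: "bN \<in> ll ` {..<n}" unfolding bN_def using n3 by (intro Max_in) (auto simp: lessThan_empty_iff)
  have bN1: "bN \<ge> 1" using bNin llpos by auto
  have bNu: "real bN \<le> K * lam + 2" using bNin llb by auto
  have Nlow: "real N \<ge> real n * (lam / K - 2)"
  proof -
    have "real N = (\<Sum>i<n. real (ll i))" unfolding N_def by simp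
    also have "\<dots> \<ge> of_nat (card {..<n}) * (lam / K - 2)"
      using llb by (intro sum_bounded_below) auto
    finally show ?thesis by simp
  qed
  have NB: "B < N"
  proof -
    have "real n * (lam / K - 2) \<ge> real n * (lam / 4)" using lK by (intro mult_left_mono) auto
    moreover have "real n * (lam / 4) \<ge> 3 * (lam / 4)" using n3 l8 by (intro mult_right_mono) auto
    ultimately show ?thesis using Nlow lB by linarith
  qed
  have N4: "real N \<ge> 6"
  proof -
    have "real n * (lam / K - 2) \<ge> real n * (lam / 4)" using lK by (intro mult_left_mono) auto
    moreover have "real n * (lam / 4) \<ge> 3 * (lam / 4)" using n3 l8 by (intro mult_right_mono) auto
    ultimately show ?thesis using Nlow l8 by linarith
  qed
  have key: "gpdist E (cycle_point w p) (cycle_point w (antipode N p)) \<ge> (1 / r) * (real N / 2)"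
    if p: "0 \<le> p" "p < real N" for p
  proof -
    let ?q = "antipode N p"
    have q: "0 \<le> ?q" "?q < real N" using antipode_circ(2,3)[of p N 0] p N4 by auto
    have pq: "\<bar>p - ?q\<bar> = real N / 2" using p unfolding antipode_def by auto
    define k where "k = nat \<lfloor>p\<rfloor>"
    define k' where "k' = nat \<lfloor>?q\<rfloor>"
    have kb: "real k \<le> p" "p < real k + 1" "k < N" unfolding k_def using p by linarith+
    have kb': "real k' \<le> ?q" "?q < real k' + 1" "k' < N" unfolding k'_def using q by linarith+
    obtain i where i: "i < n" "sum ll {..<i} \<le> k" "k < sum ll {..<Suc i}" "w k = W i (k - sum ll {..<i})"
      using segs kb(3) unfolding N_def by blast
    obtain j where j: "j < n" "sum ll {..<j} \<le> k'" "k' < sum ll {..<Suc j}" "w k' = W j (k' - sum ll {..<j})"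
      using segs kb'(3) unfolding N_def by blast
    have dWi: "gdist E (V i) (w k) \<le> real bN"
    proof -
      have "k - sum ll {..<i} \<le> ll i" using i by simp
      then have "gdn E (W i 0) (W i (k - sum ll {..<i})) \<le> k - sum ll {..<i} - 0"
        using Wi[of i] by (intro gdn_walk_le) auto
      then have "gdn E (V i) (w k) \<le> ll i" using Wi[of i] i by simp
      then show ?thesis using bN[OF i(1)] unfolding gdist_gdn by simp
    qed
    have dWj: "gdist E (w k') (V j) \<le> real bN"
    proof -
      have "k' - sum ll {..<j} \<le> ll j" using j by simp
      then have "gdn E (W j 0) (W j (k' - sum ll {..<j})) \<le> k' - sum ll {..<j} - 0"
        using Wi[of j] by (intro gdn_walk_le) auto
      then have "gdn E (V j) (w k') \<le> ll j" using Wi[of j] j by simp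
      then show ?thesis using bN[OF j(1)] gdn_sym[OF C G, of "V j" "w k'"] unfolding gdist_gdn by simp
    qed
    have X: "(real N / 2 - 1) / real bN - 1 \<le> cyc_dist n i j"
    proof (cases "k < k'")
      case True
      have "real k' - real k > real N / 2 - 1" "real k' - real k < real N / 2 + 1"
        using pq kb kb' True by (auto simp: abs_if split: if_splits)
      then show ?thesis using seg_cyc[OF bN i(1) j(1) i(2,3) j(2,3) True, of "real N / 2 - 1"] bN1
        unfolding N_def by auto
    next
      case False
      have "real k - real k' > real N / 2 - 1" "real k - real k' < real N / 2 + 1"
        using pq kb kb' False N4 by (auto simp: abs_if split: if_splits)
      then have "real k' < real k" using N4 by linarith
      then have "k' < k" by simp
      then show ?thesis using seg_cyc[OF bN j(1) i(1) j(2,3) i(2,3), of "real N / 2 - 1"] bN1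
        \<open>real k - real k' > real N / 2 - 1\<close> \<open>real k - real k' < real N / 2 + 1\<close> cyc_dist_sym[of n i j]
        unfolding N_def by auto
    qed
    have vij: "lam * cyc_dist n i j / K - 2 \<le> gdist E (V i) (V j)" using gdV[OF i(1) j(1)] Vi i(1) j(1) by simp
    have tri1: "gdist E (V i) (V j) \<le> gdist E (V i) (w k) + gdist E (w k) (w k') + gdist E (w k') (V j)"
      using gdist_tri[OF C, of "V i" "V j" "w k"] gdist_tri[OF C, of "w k" "V j" "w k'"] by linarith
    have cpin: "cycle_point w p \<in> gpoints E" using cp_in[OF cw] p unfolding N_def by auto
    have cqin: "cycle_point w ?q \<in> gpoints E" using cp_in[OF cw] q unfolding N_def by auto
    have t1: "gpdist E (w k, w k, 0) (w k', w k', 0) \<le> gpdist E (w k, w k, 0) (cycle_point w p) + gpdist E (cycle_point w p) (w k', w k', 0)"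
      by (rule gp_tri'[OF C G vert_in cpin vert_in])
    have t2: "gpdist E (cycle_point w p) (w k', w k', 0) \<le> gpdist E (cycle_point w p) (cycle_point w ?q) + gpdist E (cycle_point w ?q) (w k', w k', 0)"
      by (rule gp_tri'[OF C G cpin cqin vert_in])
    have c1: "gpdist E (w k, w k, 0) (cycle_point w p) \<le> circ N p k"
      using cp_v_circ(2)[OF C G cw, of p k] p kb unfolding N_def by auto
    have c2: "gpdist E (cycle_point w ?q) (w k', w k', 0) \<le> circ N ?q k'"
      using cp_v_circ(1)[OF C G cw, of ?q k'] q kb' unfolding N_def by auto
    have c1': "circ N p k \<le> 1" using kb unfolding circ_def by auto
    have c2': "circ N ?q k' \<le> 1" using kb' unfolding circ_def by auto
    have main: "gpdist E (cycle_point w p) (cycle_point w ?q) \<ge> lam / K * cyc_dist n i j - 4 - 2 * real bN"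
      using t1 t2 c1 c2 c1' c2' tri1 vij dWi dWj gp_vv[of E "w k" "w k'"] by simp
    have f2: "lam / (1 + d) * cyc_dist n i j - 4 - 2 * real bN \<ge> real N / (2 * (1 + 8 * d))"
      by (rule fin2[OF d(1) d(2) l8 dl]) (use bN1 bNu Nlow nd X in \<open>auto simp: K_def\<close>)
    have "(1 / r) * (real N / 2) = real N / (2 * (1 + 8 * d))" using d(3) by simp
    then show ?thesis using main f2 unfolding K_def by linarith
  qed
  show ?thesis
    by (rule exI[of _ N], rule exI[of _ w]) (use cw key NB in \<open>auto simp: almost_isometric_cycle_def N_def\<close>)
qed



lemma aic_mono:
  assumes "almost_isometric_cycle E r N w" "0 < r" "r \<le> K"
  shows "almost_isometric_cycle E K N w"
proof -
  have "(1 / K) * (real N / 2) \<le> (1 / r) * (real N / 2)"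
    using assms(2,3) by (intro mult_right_mono divide_left_mono) auto
  then show ?thesis using assms(1) unfolding almost_isometric_cycle_def by force
qed

theorem corollary3p6:
  fixes E :: "'a \<Rightarrow> 'a \<Rightarrow> bool"
  assumes "is_graph E" and "connected_graph E"
  shows "strongly_shortcut_graph E \<longleftrightarrow> \<not> approximates_ngons E"
proof
  assume ss: "strongly_shortcut_graph E"
  show "\<not> approximates_ngons E"
  proof
    assume ap: "approximates_ngons E"
    from ss obtain K B where K: "K > 1" and bd: "\<forall>n w. almost_isometric_cycle E K n w \<longrightarrow> n \<le> B"
      unfolding strongly_shortcut_graph_def by blast
    obtain N w where a: "almost_isometric_cycle E (min K 2) N w" and NB: "B < N"
      using dir2_core[OF assms(2) assms(1) ap, of "min K 2" B] K by auto
    have "almost_isometric_cycle E K N w" by (rule aic_mono[OF a]) (use K in auto)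
    then show False using bd NB by auto
  qed
next
  assume "\<not> approximates_ngons E"
  then show "strongly_shortcut_graph E" using dir1[OF assms(2) assms(1)] by blast
qed


end
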